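(* Let $q$ be a prime power, $1\le t\le s$, and $M$ an invertible $s\times s$ matrix over $\mathbb{F}_q$. Then $\mathbf{y}=\mathbf{x}M^{-1}$ defines a linear $(t,t,s,q)$-AONT if and only if every $(s-t)\times(s-t)$ submatrix of $M^{-1}$ is invertible.
   Context: For a bijection $\phi:\Gamma^s\to\Gamma^s$ over an alphabet $\Gamma$ of size $v$, its array representation is the $v^s\times 2s$ array having, for each $\mathbf{x}\in\Gamma^s$, a row $(\mathbf{x},\phi(\mathbf{x}))$. An $N\times k$ array is unbiased with respect to a set $D$ of columns if the rows restricted to $D$ contain every $|D|$-tuple over $\Gamma$ exactly $N/v^{|D|}$ times. $\phi$ is a $(t,t,s,v)$-AONT if its array representation (columns labelled $1,\dots,2s$) is unbiased with respect to $\{1,\dots,s\}$, $\{s+1,\dots,2s\}$, and $I\cup J$ for every $I\subseteq\{1,\dots,s\}$ with $|I|=t$ and every $J\subseteq\{s+1,\dots,2s\}$ with $|J|=s-t$. The map $\mathbf{x}\mapsto\mathbf{x}M^{-1}$ on row vectors of $\mathbb{F}_q^s$ is a linear $(t,t,s,q)$-AONT if it is a $(t,t,s,q)$-AONT over $\Gamma=\mathbb{F}_q$. (By convention a $0\times 0$ matrix is invertible.) *)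

theory Defs
  imports "Jordan_Normal_Form.DL_Submatrix"
begin

definition words :: "nat \<Rightarrow> 'a vec set" where
  "words s = carrier_vec s"

text \<open>Row of the array representation of phi indexed by x; columns are
  numbered 0..2s-1 (column j+1 of the paper is column j here).\<close>
definition array_row :: "nat \<Rightarrow> ('a vec \<Rightarrow> 'a vec) \<Rightarrow> 'a vec \<Rightarrow> nat \<Rightarrow> 'a" where
  "array_row s phi x j = (if j < s then x $ j else phi x $ (j - s))"

text \<open>The array representation (with v^s rows, one per x) is unbiased w.r.t. D:
  every |D|-tuple (a function u on D) occurs exactly N / v^|D| times.\<close>
definition unbiased :: "nat \<Rightarrow> ('a::finite vec \<Rightarrow> 'a vec) \<Rightarrow> nat set \<Rightarrow> bool" where
  "unbiased s phi D \<longleftrightarrow>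
     (\<forall>u :: nat \<Rightarrow> 'a.
        real (card {x \<in> words s. \<forall>j\<in>D. array_row s phi x j = u j})
          = real (card (words s :: 'a vec set)) / real (card (UNIV :: 'a set)) ^ card D)"

definition AONT :: "nat \<Rightarrow> nat \<Rightarrow> ('a::finite vec \<Rightarrow> 'a vec) \<Rightarrow> bool" where
  "AONT t s phi \<longleftrightarrow>
     bij_betw phi (words s) (words s) \<and>
     unbiased s phi {0..<s} \<and> unbiased s phi {s..<2*s} \<and>
     (\<forall>I J. I \<subseteq> {0..<s} \<longrightarrow> card I = t \<longrightarrow> J \<subseteq> {s..<2*s} \<longrightarrow> card J = s - t
        \<longrightarrow> unbiased s phi (I \<union> J))"

definition vec_times_mat :: "'a::semiring_0 vec \<Rightarrow> 'a mat \<Rightarrow> 'a vec" where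
  "vec_times_mat x A = vec (dim_col A) (\<lambda>j. x \<bullet> col A j)"

end

theory Submission
  imports Defs "Jordan_Normal_Form.Determinant"
begin

lemma card_words: "card (words n :: 'a::finite vec set) = card (UNIV::'a set) ^ n"
proof -
  have L: "card {xs :: 'a list. length xs = n} = card (UNIV::'a set) ^ n"
    using card_lists_length_eq[of "UNIV::'a set" n] by simp
  have inj: "inj_on (list_of_vec :: 'a vec \<Rightarrow> 'a list) (carrier_vec n)"
    by (rule inj_onI) (metis vec_list)
  have img: "list_of_vec ` (carrier_vec n :: 'a vec set) = {xs. length xs = n}"
  proof
    show "list_of_vec ` (carrier_vec n :: 'a vec set) \<subseteq> {xs. length xs = n}"
    proof
      fix xs assume "xs \<in> list_of_vec ` (carrier_vec n :: 'a vec set)"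
      then obtain v :: "'a vec" where "v \<in> carrier_vec n" "xs = list_of_vec v" by blast
      thus "xs \<in> {xs. length xs = n}" by (simp add: carrier_vecD)
    qed
  next
    show "{xs. length xs = n} \<subseteq> list_of_vec ` (carrier_vec n :: 'a vec set)"
    proof
      fix xs :: "'a list" assume "xs \<in> {xs. length xs = n}"
      hence "vec_of_list xs \<in> carrier_vec n" by (intro carrier_vecI) simp
      moreover have "xs = list_of_vec (vec_of_list xs)" by (rule list_vec[symmetric])
      ultimately show "xs \<in> list_of_vec ` (carrier_vec n :: 'a vec set)" by blast
    qed
  qed
  have "card (carrier_vec n :: 'a vec set) = card {xs :: 'a list. length xs = n}"
    using card_image[OF inj] img by simp
  thus ?thesis unfolding words_def using L by simp
qed

lemma unbiased_iff_inj:
  fixes phi :: "'a::finite vec \<Rightarrow> 'a vec"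
  assumes D: "finite D" "card D = s"
  shows "unbiased s phi D \<longleftrightarrow> inj_on (\<lambda>x. restrict (array_row s phi x) D) (words s)"
proof -
  let ?F = "\<lambda>x. restrict (array_row s phi x) D"
  let ?W = "words s :: 'a vec set"
  have cW: "card ?W = card (UNIV::'a set) ^ s" by (rule card_words)
  have pos: "real (card (UNIV::'a set)) ^ s \<noteq> 0" by simp
  have rhs: "real (card ?W) / real (card (UNIV::'a set)) ^ card D = 1"
    using cW D pos by simp
  have set_eq: "{x \<in> ?W. \<forall>j\<in>D. array_row s phi x j = u j} = {x \<in> ?W. ?F x = restrict u D}" for u
    by (intro Collect_cong conj_cong refl) (auto simp: fun_eq_iff restrict_def)
  have finW: "finite ?W" using cW by (intro card_ge_0_finite) (simp add: finite_UNIV_card_ge_0)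
  have cP: "card (D \<rightarrow>\<^sub>E (UNIV::'a set)) = card (UNIV::'a set) ^ s"
    using D by (simp add: card_PiE prod_constant)
  have "unbiased s phi D \<longleftrightarrow> (\<forall>u. card {x \<in> ?W. ?F x = restrict u D} = 1)"
    unfolding unbiased_def rhs set_eq by simp
  also have "\<dots> \<longleftrightarrow> inj_on ?F ?W"
  proof
    assume H: "\<forall>u. card {x \<in> ?W. ?F x = restrict u D} = 1"
    show "inj_on ?F ?W"
    proof (rule inj_onI)
      fix x y assume xy: "x \<in> ?W" "y \<in> ?W" "?F x = ?F y"
      have "card {z \<in> ?W. ?F z = restrict (array_row s phi x) D} = 1" using H by blast
      then obtain z where "{z' \<in> ?W. ?F z' = restrict (array_row s phi x) D} = {z}"
        using card_1_singletonE by blast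
      moreover have "x \<in> {z' \<in> ?W. ?F z' = restrict (array_row s phi x) D}" using xy by simp
      moreover have "y \<in> {z' \<in> ?W. ?F z' = restrict (array_row s phi x) D}" using xy by simp
      ultimately show "x = y" by (metis singletonD)
    qed
  next
    assume inj: "inj_on ?F ?W"
    have sub: "?F ` ?W \<subseteq> D \<rightarrow>\<^sub>E UNIV" by auto
    have "card (?F ` ?W) = card (D \<rightarrow>\<^sub>E (UNIV::'a set))"
      using card_image[OF inj] cW cP by simp
    hence img: "?F ` ?W = D \<rightarrow>\<^sub>E UNIV"
      using sub D by (intro card_subset_eq) (auto intro: finite_PiE)
    show "\<forall>u. card {x \<in> ?W. ?F x = restrict u D} = 1"
    proof
      fix u
      have "restrict u D \<in> ?F ` ?W" using img by auto
      then obtain x where x: "x \<in> ?W" "?F x = restrict u D" by auto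
      have "{x \<in> ?W. ?F x = restrict u D} = {x}"
        using x inj unfolding inj_on_def by auto
      thus "card {x \<in> ?W. ?F x = restrict u D} = 1" by simp
    qed
  qed
  finally show ?thesis .
qed

lemma idx_lt:
  fixes I :: "nat set"
  assumes "finite I" "i \<in> I"
  shows "card {a\<in>I. a < i} < card I"
proof -
  have "i \<notin> {a\<in>I. a < i}" by simp
  hence "{a\<in>I. a < i} \<subset> I" using assms by blast
  thus ?thesis using assms by (intro psubset_card_mono) auto
qed

lemma pick_bij:
  assumes "finite I"
  shows "bij_betw (pick I) {0..<card I} I"
  by (rule bij_betw_byWitness[where f'="\<lambda>i. card {a\<in>I. a < i}"])
     (auto simp: card_pick pick_card_in_set idx_lt assms pick_in_set)

lemma invertible_iff_det:
  fixes S :: "'a::field mat"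
  assumes S: "S \<in> carrier_mat k k"
  shows "invertible_mat S \<longleftrightarrow> det S \<noteq> 0"
proof
  assume "invertible_mat S"
  then obtain B where AB: "S * B = 1\<^sub>m k" and BA: "B * S = 1\<^sub>m (dim_row B)"
    using S unfolding invertible_mat_def inverts_mat_def by auto
  have "dim_row B = k" using arg_cong[OF BA, of dim_col] S by simp
  moreover have "dim_col B = k" using arg_cong[OF AB, of dim_col] S by simp
  ultimately have B: "B \<in> carrier_mat k k" by auto
  have "det S * det B = 1" using arg_cong[OF AB, of det] det_mult[OF S B] by simp
  thus "det S \<noteq> 0" by auto
next
  assume "det S \<noteq> 0"
  from det_non_zero_imp_unit[OF S this]
  obtain B where B: "B \<in> carrier_mat k k" and "B * S = 1\<^sub>m k" "S * B = 1\<^sub>m k"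
    unfolding Units_def ring_mat_def by auto
  thus "invertible_mat S" using S unfolding invertible_mat_def inverts_mat_def square_mat.simps
    by (intro conjI exI[of _ B]) auto
qed

lemma phi_nth:
  fixes Minv :: "'a::field mat"
  assumes "x \<in> carrier_vec s" "Minv \<in> carrier_mat s s" "j < s"
  shows "vec_times_mat x Minv $ j = (\<Sum>i\<in>{0..<s}. x $ i * Minv $$ (i, j))"
  using assms unfolding vec_times_mat_def scalar_prod_def by simp

lemma bridge:
  fixes Minv :: "'a::field mat"
  assumes x: "x \<in> carrier_vec s" and M: "Minv \<in> carrier_mat s s" and j: "j < s"
    and I: "I \<subseteq> {0..<s}" and z: "\<forall>i\<in>{0..<s}-I. x $ i = 0"
  shows "vec_times_mat x Minv $ j = (\<Sum>a\<in>{0..<card I}. x $ pick I a * Minv $$ (pick I a, j))"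
proof -
  have fI: "finite I" using I finite_subset by blast
  have "vec_times_mat x Minv $ j = (\<Sum>i\<in>{0..<s}. x $ i * Minv $$ (i, j))"
    by (rule phi_nth[OF x M j])
  also have "\<dots> = (\<Sum>i\<in>I. x $ i * Minv $$ (i, j))"
    using I z by (intro sum.mono_neutral_right) auto
  also have "\<dots> = (\<Sum>a\<in>{0..<card I}. x $ pick I a * Minv $$ (pick I a, j))"
    by (rule sum.reindex_bij_betw[OF pick_bij[OF fI], symmetric])
  finally show ?thesis .
qed

lemma sub_inv_iff_kernel:
  fixes Minv :: "'a::field mat"
  assumes M: "Minv \<in> carrier_mat s s" and I: "I \<subseteq> {0..<s}" and J: "J \<subseteq> {0..<s}"
    and cIJ: "card I = card J"
  shows "invertible_mat (submatrix Minv I J) \<longleftrightarrow>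
    (\<forall>x\<in>carrier_vec s. (\<forall>i\<in>{0..<s}-I. x $ i = 0) \<and> (\<forall>j\<in>J. vec_times_mat x Minv $ j = 0)
       \<longrightarrow> x = 0\<^sub>v s)"
proof -
  define k where "k = card I"
  define S where "S = submatrix Minv I J"
  have fI: "finite I" using I finite_subset by blast
  have fJ: "finite J" using J finite_subset by blast
  have eI: "{i. i < dim_row Minv \<and> i \<in> I} = I" using I M by auto
  have eJ: "{i. i < dim_col Minv \<and> i \<in> J} = J" using J M by auto
  have S: "S \<in> carrier_mat k k" unfolding S_def k_def using dim_submatrix[of Minv I J] eI eJ cIJ
    by auto
  have Sij: "S $$ (a, b) = Minv $$ (pick I a, pick J b)" if "a < k" "b < k" for a b
    unfolding S_def using submatrix_index[of a Minv I b J] that eI eJ cIJ k_def by auto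
  have ST: "(transpose_mat S *\<^sub>v v) $ b = (\<Sum>a\<in>{0..<k}. v $ a * Minv $$ (pick I a, pick J b))"
    if v: "v \<in> carrier_vec k" and b: "b < k" for v b
  proof -
    have "(transpose_mat S *\<^sub>v v) $ b = (\<Sum>a\<in>{0..<k}. S $$ (a, b) * v $ a)"
      using S v b unfolding mult_mat_vec_def scalar_prod_def by auto
    also have "\<dots> = (\<Sum>a\<in>{0..<k}. v $ a * Minv $$ (pick I a, pick J b))"
      using Sij b by (intro sum.cong) (auto simp: mult.commute)
    finally show ?thesis .
  qed
  have pI: "pick I a \<in> I" if "a < k" for a using pick_in_set that k_def by auto
  have pJ: "pick J a \<in> J" if "a < k" for a using pick_in_set that k_def cIJ by auto
  have "invertible_mat S \<longleftrightarrow> det (transpose_mat S) \<noteq> 0"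
    using invertible_iff_det[OF S] det_transpose[OF S] by simp
  also have "\<dots> \<longleftrightarrow> \<not> (\<exists>v. v \<in> carrier_vec k \<and> v \<noteq> 0\<^sub>v k \<and> transpose_mat S *\<^sub>v v = 0\<^sub>v k)"
    using det_0_iff_vec_prod_zero[of "transpose_mat S" k] S by auto
  also have "\<dots> \<longleftrightarrow> (\<forall>x\<in>carrier_vec s. (\<forall>i\<in>{0..<s}-I. x $ i = 0) \<and> (\<forall>j\<in>J. vec_times_mat x Minv $ j = 0)
       \<longrightarrow> x = 0\<^sub>v s)"
  proof
    assume nv: "\<not> (\<exists>v. v \<in> carrier_vec k \<and> v \<noteq> 0\<^sub>v k \<and> transpose_mat S *\<^sub>v v = 0\<^sub>v k)"
    show "\<forall>x\<in>carrier_vec s. (\<forall>i\<in>{0..<s}-I. x $ i = 0) \<and> (\<forall>j\<in>J. vec_times_mat x Minv $ j = 0)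
       \<longrightarrow> x = 0\<^sub>v s"
    proof (intro ballI impI)
      fix x :: "'a vec" assume x: "x \<in> carrier_vec s"
        and h: "(\<forall>i\<in>{0..<s}-I. x $ i = 0) \<and> (\<forall>j\<in>J. vec_times_mat x Minv $ j = 0)"
      define v where "v = vec k (\<lambda>a. x $ pick I a)"
      have v: "v \<in> carrier_vec k" unfolding v_def by simp
      have "transpose_mat S *\<^sub>v v = 0\<^sub>v k"
      proof (rule eq_vecI)
        fix b assume "b < dim_vec (0\<^sub>v k :: 'a vec)"
        hence b: "b < k" by simp
        have pb: "pick J b < s" using pJ[OF b] J by auto
        have "(transpose_mat S *\<^sub>v v) $ b = (\<Sum>a\<in>{0..<k}. x $ pick I a * Minv $$ (pick I a, pick J b))"
          by (subst ST[OF v b]) (auto simp: v_def intro: sum.cong)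
        also have "\<dots> = vec_times_mat x Minv $ pick J b"
          using bridge[OF x M pb I] h k_def by simp
        also have "\<dots> = 0" using h pJ[OF b] by auto
        finally show "(transpose_mat S *\<^sub>v v) $ b = 0\<^sub>v k $ b" using b by simp
      qed (use S in simp)
      hence v0: "v = 0\<^sub>v k" using nv v by blast
      show "x = 0\<^sub>v s"
      proof (rule eq_vecI)
        fix i assume "i < dim_vec (0\<^sub>v s :: 'a vec)"
        hence i: "i < s" by simp
        show "x $ i = 0\<^sub>v s $ i"
        proof (cases "i \<in> I")
          case True
          define a where "a = card {a\<in>I. a < i}"
          have a: "a < k" unfolding a_def k_def using idx_lt[OF fI True] .
          have "pick I a = i" unfolding a_def using pick_card_in_set[OF True] .
          hence "x $ i = v $ a" unfolding v_def using a by simp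
          thus ?thesis using v0 a i by simp
        next
          case False thus ?thesis using h i by simp
        qed
      qed (use x in simp)
    qed
  next
    assume K: "\<forall>x\<in>carrier_vec s. (\<forall>i\<in>{0..<s}-I. x $ i = 0) \<and> (\<forall>j\<in>J. vec_times_mat x Minv $ j = 0)
       \<longrightarrow> x = 0\<^sub>v s"
    show "\<not> (\<exists>v. v \<in> carrier_vec k \<and> v \<noteq> 0\<^sub>v k \<and> transpose_mat S *\<^sub>v v = 0\<^sub>v k)"
    proof
      assume "\<exists>v. v \<in> carrier_vec k \<and> v \<noteq> 0\<^sub>v k \<and> transpose_mat S *\<^sub>v v = 0\<^sub>v k"
      then obtain v where v: "v \<in> carrier_vec k" and vn: "v \<noteq> 0\<^sub>v k"
        and Sv: "transpose_mat S *\<^sub>v v = 0\<^sub>v k" by blast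
      define x where "x = vec s (\<lambda>i. if i \<in> I then v $ card {a\<in>I. a < i} else 0)"
      have x: "x \<in> carrier_vec s" unfolding x_def by simp
      have xp: "x $ pick I a = v $ a" if a: "a < k" for a
      proof -
        have "pick I a < s" using pI[OF a] I by auto
        thus ?thesis unfolding x_def using pI[OF a] card_pick[of a I] a k_def by auto
      qed
      have z: "\<forall>i\<in>{0..<s}-I. x $ i = 0" unfolding x_def by auto
      have "\<forall>j\<in>J. vec_times_mat x Minv $ j = 0"
      proof
        fix j assume jJ: "j \<in> J"
        define b where "b = card {a\<in>J. a < j}"
        have b: "b < k" unfolding b_def k_def cIJ using idx_lt[OF fJ jJ] .
        have pb: "pick J b = j" unfolding b_def using pick_card_in_set[OF jJ] .
        have js: "j < s" using jJ J by auto
        have "vec_times_mat x Minv $ j = (\<Sum>a\<in>{0..<k}. x $ pick I a * Minv $$ (pick I a, j))"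
          using bridge[OF x M js I z] k_def by simp
        also have "\<dots> = (\<Sum>a\<in>{0..<k}. v $ a * Minv $$ (pick I a, pick J b))"
          using xp pb by (intro sum.cong) auto
        also have "\<dots> = (transpose_mat S *\<^sub>v v) $ b" using ST[OF v b] by simp
        also have "\<dots> = 0" using Sv b by simp
        finally show "vec_times_mat x Minv $ j = 0" .
      qed
      hence "x = 0\<^sub>v s" using K x z by blast
      hence "v = 0\<^sub>v k"
      proof -
        assume x0: "x = 0\<^sub>v s"
        show "v = 0\<^sub>v k"
        proof (rule eq_vecI)
          fix a assume "a < dim_vec (0\<^sub>v k :: 'a vec)"
          hence a: "a < k" by simp
          have "pick I a < s" using pI[OF a] I by auto
          thus "v $ a = 0\<^sub>v k $ a" using xp[OF a] x0 a by simp
        qed (use v in simp)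
      qed
      thus False using vn by simp
    qed
  qed
  finally show ?thesis unfolding S_def .
qed


lemma phi_dim:
  fixes Minv :: "'a::field mat"
  assumes "Minv \<in> carrier_mat s s"
  shows "vec_times_mat x Minv \<in> carrier_vec s"
  using assms unfolding vec_times_mat_def by simp

lemma row_lin:
  fixes Minv :: "'a::field mat"
  assumes "x \<in> carrier_vec s" "y \<in> carrier_vec s" "Minv \<in> carrier_mat s s" "j < 2*s"
  shows "array_row s (\<lambda>x. vec_times_mat x Minv) (x - y) j
     = array_row s (\<lambda>x. vec_times_mat x Minv) x j - array_row s (\<lambda>x. vec_times_mat x Minv) y j"
proof (cases "j < s")
  case True thus ?thesis using assms by (simp add: array_row_def)
next
  case False
  hence js: "j - s < s" using assms by simp
  have "x - y \<in> carrier_vec s" using assms by simp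
  hence "vec_times_mat (x - y) Minv $ (j - s) = (\<Sum>i\<in>{0..<s}. (x - y) $ i * Minv $$ (i, j - s))"
    using phi_nth assms js by blast
  also have "\<dots> = (\<Sum>i\<in>{0..<s}. x $ i * Minv $$ (i, j - s) - y $ i * Minv $$ (i, j - s))"
    using assms by (intro sum.cong) (auto simp: left_diff_distrib)
  also have "\<dots> = vec_times_mat x Minv $ (j - s) - vec_times_mat y Minv $ (j - s)"
    by (simp add: sum_subtractf phi_nth[OF assms(1,3) js] phi_nth[OF assms(2,3) js])
  finally show ?thesis using False by (simp add: array_row_def)
qed

lemma row_zero:
  fixes Minv :: "'a::field mat"
  assumes "Minv \<in> carrier_mat s s" "j < 2*s"
  shows "array_row s (\<lambda>x. vec_times_mat x Minv) (0\<^sub>v s) j = 0"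
proof (cases "j < s")
  case True thus ?thesis by (simp add: array_row_def)
next
  case False
  hence js: "j - s < s" using assms by simp
  show ?thesis using False phi_nth[OF zero_carrier_vec assms(1) js] by (simp add: array_row_def)
qed

lemma inj_iff_kernel:
  fixes Minv :: "'a::field mat"
  assumes M: "Minv \<in> carrier_mat s s" and I: "I \<subseteq> {0..<s}" and J: "J \<subseteq> {s..<2*s}"
  shows "inj_on (\<lambda>x. restrict (array_row s (\<lambda>x. vec_times_mat x Minv) x) (I \<union> J)) (words s)
     \<longleftrightarrow> (\<forall>x\<in>carrier_vec s. (\<forall>i\<in>I. x $ i = 0) \<and> (\<forall>j\<in>J. vec_times_mat x Minv $ (j - s) = 0)
           \<longrightarrow> x = 0\<^sub>v s)"
    (is "inj_on ?F _ \<longleftrightarrow> ?K")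
proof
  assume inj: "inj_on ?F (words s)"
  show ?K
  proof (intro ballI impI)
    fix x :: "'a vec" assume x: "x \<in> carrier_vec s" and k: "(\<forall>i\<in>I. x $ i = 0) \<and> (\<forall>j\<in>J. vec_times_mat x Minv $ (j - s) = 0)"
    have "?F x = ?F (0\<^sub>v s)"
    proof
      fix j show "?F x j = ?F (0\<^sub>v s) j"
      proof (cases "j \<in> I \<union> J")
        case True
        hence j2: "j < 2*s" using I J by auto
        have "array_row s (\<lambda>x. vec_times_mat x Minv) x j = 0"
          using True k I J by (auto simp: array_row_def)
        thus ?thesis using True row_zero[OF M j2] by simp
      qed simp
    qed
    thus "x = 0\<^sub>v s" using inj x by (auto simp: words_def dest: inj_onD)
  qed
next
  assume K: ?K
  show "inj_on ?F (words s)"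
  proof (rule inj_onI)
    fix x y assume x: "x \<in> words s" and y: "y \<in> words s" and e: "?F x = ?F y"
    have xc: "x \<in> carrier_vec s" and yc: "y \<in> carrier_vec s" using x y by (auto simp: words_def)
    have rz: "array_row s (\<lambda>x. vec_times_mat x Minv) (x - y) j = 0" if "j \<in> I \<union> J" for j
    proof -
      have j2: "j < 2*s" using that I J by auto
      have "?F x j = ?F y j" using e by simp
      hence "array_row s (\<lambda>x. vec_times_mat x Minv) x j = array_row s (\<lambda>x. vec_times_mat x Minv) y j"
        using that by simp
      thus ?thesis using row_lin[OF xc yc M j2] by simp
    qed
    have xy0: "x - y = 0\<^sub>v s"
    proof (rule K[rule_format])
      show "x - y \<in> carrier_vec s" using xc yc by simp
      show "(\<forall>i\<in>I. (x - y) $ i = 0) \<and> (\<forall>j\<in>J. vec_times_mat (x - y) Minv $ (j - s) = 0)"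
      proof (intro conjI ballI)
        fix i assume i: "i \<in> I"
        hence "i < s" using I by auto
        thus "(x - y) $ i = 0" using rz[of i] i xc yc by (simp add: array_row_def)
      next
        fix j assume j: "j \<in> J"
        hence "\<not> j < s" using J by auto
        thus "vec_times_mat (x - y) Minv $ (j - s) = 0" using rz[of j] j by (simp add: array_row_def)
      qed
    qed
    have "x $ i = y $ i" if "i < s" for i
      using arg_cong[OF xy0, of "\<lambda>v. v $ i"] that xc yc by simp
    thus "x = y" using xc yc by (intro eq_vecI) auto
  qed
qed

lemma vtm_transpose:
  fixes A :: "'a::field mat"
  assumes A: "A \<in> carrier_mat n m" and x: "x \<in> carrier_vec n"
  shows "vec_times_mat x A = transpose_mat A *\<^sub>v x"
proof (rule eq_vecI)
  fix j assume "j < dim_vec (transpose_mat A *\<^sub>v x)"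
  hence j: "j < m" using A by simp
  have colc: "col A j \<in> carrier_vec n" using A unfolding carrier_mat_def carrier_vec_def by auto
  have "vec_times_mat x A $ j = x \<bullet> col A j" using A j by (simp add: vec_times_mat_def)
  also have "\<dots> = col A j \<bullet> x" by (rule comm_scalar_prod[OF x colc])
  also have "\<dots> = (transpose_mat A *\<^sub>v x) $ j" using A j unfolding mult_mat_vec_def by (simp add: row_transpose)
  finally show "vec_times_mat x A $ j = (transpose_mat A *\<^sub>v x) $ j" .
qed (use A in \<open>simp add: vec_times_mat_def\<close>)

theorem mainTheorem6:
  fixes M Minv :: "'a :: {finite, field} mat" and s t :: nat
  assumes "1 \<le> t" and "t \<le> s"
    and "M \<in> carrier_mat s s" and "invertible_mat M"
    and "Minv \<in> carrier_mat s s" and "M * Minv = 1\<^sub>m s" and "Minv * M = 1\<^sub>m s"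
  shows "AONT t s (\<lambda>x. vec_times_mat x Minv) \<longleftrightarrow>
           (\<forall>I J. I \<subseteq> {0..<s} \<longrightarrow> J \<subseteq> {0..<s} \<longrightarrow> card I = s - t \<longrightarrow> card J = s - t
              \<longrightarrow> invertible_mat (submatrix Minv I J))"
proof -
  note Mc = assms(3) and Mi = assms(5)
  let ?phi = "\<lambda>x. vec_times_mat x Minv"
  have hback: "vec_times_mat (?phi x) M = x" if x: "x \<in> carrier_vec s" for x :: "'a vec"
  proof -
    have "vec_times_mat (?phi x) M = transpose_mat M *\<^sub>v (transpose_mat Minv *\<^sub>v x)"
    proof -
      have c: "transpose_mat Minv *\<^sub>v x \<in> carrier_vec s"
        using Mi x by (metis mult_mat_vec_carrier transpose_carrier_mat)
      show ?thesis using vtm_transpose[OF Mi x] vtm_transpose[OF Mc c] by simp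
    qed
    also have "\<dots> = (transpose_mat M * transpose_mat Minv) *\<^sub>v x"
      using Mc Mi x by (simp add: assoc_mult_mat_vec[of _ s s _ s])
    also have "\<dots> = transpose_mat (Minv * M) *\<^sub>v x" using transpose_mult[OF Mi Mc] by simp
    also have "\<dots> = x" using assms(7) x by simp
    finally show ?thesis .
  qed
  have hfwd: "?phi (vec_times_mat y M) = y" if y: "y \<in> carrier_vec s" for y :: "'a vec"
  proof -
    have "?phi (vec_times_mat y M) = transpose_mat Minv *\<^sub>v (transpose_mat M *\<^sub>v y)"
    proof -
      have c: "transpose_mat M *\<^sub>v y \<in> carrier_vec s"
        using Mc y by (metis mult_mat_vec_carrier transpose_carrier_mat)
      show ?thesis using vtm_transpose[OF Mc y] vtm_transpose[OF Mi c] by simp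
    qed
    also have "\<dots> = (transpose_mat Minv * transpose_mat M) *\<^sub>v y"
      using Mc Mi y by (simp add: assoc_mult_mat_vec[of _ s s _ s])
    also have "\<dots> = transpose_mat (M * Minv) *\<^sub>v y" using transpose_mult[OF Mc Mi] by simp
    also have "\<dots> = y" using assms(6) y by simp
    finally show ?thesis .
  qed
  have bij: "bij_betw ?phi (words s) (words s)"
    by (rule bij_betw_byWitness[where f'="\<lambda>y. vec_times_mat y M"])
       (auto simp: words_def hback hfwd phi_dim[OF Mi] phi_dim[OF Mc])
  have ub_gen: "unbiased s ?phi (I \<union> J) \<longleftrightarrow>
     (\<forall>x\<in>carrier_vec s. (\<forall>i\<in>I. x $ i = 0) \<and> (\<forall>j\<in>J. ?phi x $ (j - s) = 0) \<longrightarrow> x = 0\<^sub>v s)"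
    if I: "I \<subseteq> {0..<s}" and J: "J \<subseteq> {s..<2*s}" and c: "card I + card J = s" for I J
  proof -
    have fI: "finite I" using I finite_subset by blast
    have fJ: "finite J" using J finite_subset by blast
    have "x < s" if "x \<in> I" for x using I that by auto
    moreover have "s \<le> x" if "x \<in> J" for x using J that by auto
    ultimately have "I \<inter> J = {}" by (meson disjoint_iff not_le)
    hence "card (I \<union> J) = s" using c fI fJ card_Un_disjoint by metis
    hence "unbiased s ?phi (I \<union> J) \<longleftrightarrow> inj_on (\<lambda>x. restrict (array_row s ?phi x) (I \<union> J)) (words s)"
      using fI fJ by (intro unbiased_iff_inj) auto
    thus ?thesis using inj_iff_kernel[OF Mi I J] by simp
  qed
  have u1: "unbiased s ?phi {0..<s}"
  proof -
    have k: "\<forall>x\<in>carrier_vec s. (\<forall>i\<in>{0..<s}. x $ i = 0) \<and> (\<forall>j\<in>{}. ?phi x $ (j - s) = 0) \<longrightarrow> x = 0\<^sub>v s"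
    proof (intro ballI impI)
      fix x :: "'a vec" assume x: "x \<in> carrier_vec s"
        and h: "(\<forall>i\<in>{0..<s}. x $ i = 0) \<and> (\<forall>j\<in>{}. ?phi x $ (j - s) = 0)"
      show "x = 0\<^sub>v s"
      proof (rule eq_vecI)
        fix i assume "i < dim_vec (0\<^sub>v s :: 'a vec)"
        thus "x $ i = 0\<^sub>v s $ i" using h by simp
      qed (use x in simp)
    qed
    have "unbiased s ?phi ({0..<s} \<union> {})" using ub_gen[of "{0..<s}" "{}"] k by simp
    thus ?thesis by simp
  qed
  have phi0: "?phi (0\<^sub>v s) = 0\<^sub>v s"
  proof (rule eq_vecI)
    fix j assume "j < dim_vec (0\<^sub>v s :: 'a vec)"
    hence j: "j < s" by simp
    show "?phi (0\<^sub>v s) $ j = 0\<^sub>v s $ j"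
      using phi_nth[OF zero_carrier_vec Mi j] j by simp
  qed (use phi_dim[OF Mi] in simp)
  have u2: "unbiased s ?phi {s..<2*s}"
  proof -
    have k: "\<forall>x\<in>carrier_vec s. (\<forall>i\<in>{}. x $ i = 0) \<and> (\<forall>j\<in>{s..<2*s}. ?phi x $ (j - s) = 0) \<longrightarrow> x = 0\<^sub>v s"
    proof (intro ballI impI)
      fix x :: "'a vec" assume x: "x \<in> carrier_vec s"
        and h: "(\<forall>i\<in>{}. x $ i = 0) \<and> (\<forall>j\<in>{s..<2*s}. ?phi x $ (j - s) = 0)"
      have px: "?phi x = 0\<^sub>v s"
      proof (rule eq_vecI)
        fix j assume "j < dim_vec (0\<^sub>v s :: 'a vec)"
        hence j: "j < s" by simp
        hence "j + s \<in> {s..<2*s}" by simp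
        hence "?phi x $ (j + s - s) = 0" using h by blast
        thus "?phi x $ j = 0\<^sub>v s $ j" using j by simp
      qed (use phi_dim[OF Mi] in simp)
      have "x = vec_times_mat (?phi x) M" using hback[OF x] by simp
      also have "\<dots> = vec_times_mat (?phi (0\<^sub>v s)) M" using px phi0 by simp
      also have "\<dots> = 0\<^sub>v s" using hback[OF zero_carrier_vec] .
      finally show "x = 0\<^sub>v s" .
    qed
    have "unbiased s ?phi ({} \<union> {s..<2*s})" using ub_gen[of "{}" "{s..<2*s}"] k by simp
    thus ?thesis by simp
  qed
  show ?thesis
  proof
    assume A: "AONT t s ?phi"
    show "\<forall>I J. I \<subseteq> {0..<s} \<longrightarrow> J \<subseteq> {0..<s} \<longrightarrow> card I = s - t \<longrightarrow> card J = s - t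
              \<longrightarrow> invertible_mat (submatrix Minv I J)"
    proof (intro allI impI)
      fix I' J' assume I': "I' \<subseteq> {0..<s}" and J': "J' \<subseteq> {0..<s}" and cI: "card I' = s - t"
        and cJ: "card J' = s - t"
      define I where "I = {0..<s} - I'"
      define J where "J = (\<lambda>j. j + s) ` J'"
      have fI': "finite I'" using I' finite_subset by blast
      have I: "I \<subseteq> {0..<s}" unfolding I_def by auto
      have J: "J \<subseteq> {s..<2*s}" unfolding J_def using J' by auto
      have cI2: "card I = t" unfolding I_def using card_Diff_subset[OF fI' I'] cI assms(2) by simp
      have cJ2: "card J = s - t" unfolding J_def using cJ by (simp add: card_image inj_on_def)
      have all: "\<forall>I J. I \<subseteq> {0..<s} \<longrightarrow> card I = t \<longrightarrow> J \<subseteq> {s..<2*s} \<longrightarrow> card J = s - t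
        \<longrightarrow> unbiased s ?phi (I \<union> J)" using A unfolding AONT_def by blast
      have "unbiased s ?phi (I \<union> J)" using all[rule_format, OF I cI2 J cJ2] .
      hence K: "\<forall>x\<in>carrier_vec s. (\<forall>i\<in>I. x $ i = 0) \<and> (\<forall>j\<in>J. ?phi x $ (j - s) = 0) \<longrightarrow> x = 0\<^sub>v s"
        using ub_gen[OF I J] cI2 cJ2 assms(2) by simp
      have "\<forall>x\<in>carrier_vec s. (\<forall>i\<in>{0..<s}-I'. x $ i = 0) \<and> (\<forall>j\<in>J'. ?phi x $ j = 0) \<longrightarrow> x = 0\<^sub>v s"
      proof (intro ballI impI)
        fix x :: "'a vec" assume x: "x \<in> carrier_vec s"
          and h: "(\<forall>i\<in>{0..<s}-I'. x $ i = 0) \<and> (\<forall>j\<in>J'. ?phi x $ j = 0)"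
        have h1: "\<forall>i\<in>I. x $ i = 0" using h unfolding I_def by blast
        have h2: "\<forall>j\<in>J. ?phi x $ (j - s) = 0"
        proof
          fix j assume "j \<in> J"
          then obtain j' where j': "j' \<in> J'" "j = j' + s" unfolding J_def by blast
          thus "?phi x $ (j - s) = 0" using h by auto
        qed
        show "x = 0\<^sub>v s" using K x h1 h2 by blast
      qed
      thus "invertible_mat (submatrix Minv I' J')"
        using sub_inv_iff_kernel[OF Mi I' J'] cI cJ by simp
    qed
  next
    assume H: "\<forall>I J. I \<subseteq> {0..<s} \<longrightarrow> J \<subseteq> {0..<s} \<longrightarrow> card I = s - t \<longrightarrow> card J = s - t
              \<longrightarrow> invertible_mat (submatrix Minv I J)"
    have "unbiased s ?phi (I \<union> J)"
      if I: "I \<subseteq> {0..<s}" and cI: "card I = t" and J: "J \<subseteq> {s..<2*s}" and cJ: "card J = s - t" for I J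
    proof -
      define I' where "I' = {0..<s} - I"
      define J' where "J' = (\<lambda>j. j - s) ` J"
      have fI: "finite I" using I finite_subset by blast
      have I': "I' \<subseteq> {0..<s}" unfolding I'_def by auto
      have J': "J' \<subseteq> {0..<s}" unfolding J'_def using J by force
      have cI': "card I' = s - t" unfolding I'_def using card_Diff_subset[OF fI I] cI by simp
      have "inj_on (\<lambda>j. j - s) J"
      proof (rule inj_onI)
        fix x y assume xy: "x \<in> J" "y \<in> J" "x - s = y - s"
        have "x \<in> {s..<2*s}" "y \<in> {s..<2*s}" using J xy by auto
        thus "x = y" using xy by (simp add: eq_diff_iff)
      qed
      hence cJ': "card J' = s - t" unfolding J'_def using cJ by (simp add: card_image)
      have "invertible_mat (submatrix Minv I' J')" using H I' J' cI' cJ' by blast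
      hence K: "\<forall>x\<in>carrier_vec s. (\<forall>i\<in>{0..<s}-I'. x $ i = 0) \<and> (\<forall>j\<in>J'. ?phi x $ j = 0) \<longrightarrow> x = 0\<^sub>v s"
        using sub_inv_iff_kernel[OF Mi I' J'] cI' cJ' by simp
      have "{0..<s}-I' = I" unfolding I'_def using I by auto
      have "\<forall>x\<in>carrier_vec s. (\<forall>i\<in>I. x $ i = 0) \<and> (\<forall>j\<in>J. ?phi x $ (j - s) = 0) \<longrightarrow> x = 0\<^sub>v s"
      proof (intro ballI impI)
        fix x :: "'a vec" assume x: "x \<in> carrier_vec s"
          and h: "(\<forall>i\<in>I. x $ i = 0) \<and> (\<forall>j\<in>J. ?phi x $ (j - s) = 0)"
        have h1: "\<forall>i\<in>{0..<s}-I'. x $ i = 0" using h \<open>{0..<s}-I' = I\<close> by simp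
        have h2: "\<forall>j\<in>J'. ?phi x $ j = 0"
        proof
          fix j assume "j \<in> J'"
          then obtain j' where j': "j' \<in> J" "j = j' - s" unfolding J'_def by blast
          thus "?phi x $ j = 0" using h by auto
        qed
        show "x = 0\<^sub>v s" using K x h1 h2 by blast
      qed
      thus ?thesis using ub_gen[OF I J] cI cJ assms(2) by simp
    qed
    thus "AONT t s ?phi" unfolding AONT_def using bij u1 u2 by blast
  qed
qed

end
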